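(* Let $G$ be a connected closed subgroup of $\mathrm{SO}(k)$ acting transitively on the unit sphere $S^{k-1}\subset\mathbb{R}^k$, with Lie algebra $\mathfrak{g}$. Then every $A\in\mathrm{GL}_k(\mathbb{R})$ normalizing $\mathfrak{g}$ (i.e. $A\mathfrak{g}A^{-1}=\mathfrak{g}$) belongs to the conformal group $\mathrm{CO}(k)=\mathbb{R}^*\,\mathrm{SO}(k)$. *)

theory Defs
  imports "HOL-Analysis.Analysis"
begin

text \<open>Matrix powers w.r.t. the matrix product (not the componentwise product).\<close>
primrec mat_power :: "real^'n^'n \<Rightarrow> nat \<Rightarrow> real^'n^'n" where
  "mat_power X 0 = mat 1"
| "mat_power X (Suc m) = X ** mat_power X m"

definition mat_exp :: "real^'n^'n \<Rightarrow> real^'n^'n" where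
  "mat_exp X = (\<Sum>m. (1 / fact m) *\<^sub>R mat_power X m)"

definition SO :: "(real^'n^'n) set" where
  "SO = {A. orthogonal_matrix A \<and> det A = 1}"

definition matrix_subgroup :: "(real^'n^'n) set \<Rightarrow> bool" where
  "matrix_subgroup G \<longleftrightarrow> mat 1 \<in> G \<and> (\<forall>A\<in>G. \<forall>B\<in>G. A ** B \<in> G)
     \<and> (\<forall>A\<in>G. invertible A \<and> matrix_inv A \<in> G)"

definition lie_algebra :: "(real^'n^'n) set \<Rightarrow> (real^'n^'n) set" where
  "lie_algebra G = {X. \<forall>t::real. mat_exp (t *\<^sub>R X) \<in> G}"

definition transitive_on_sphere :: "(real^'n^'n) set \<Rightarrow> bool" where
  "transitive_on_sphere G \<longleftrightarrow>
     (\<forall>x y :: real^'n. norm x = 1 \<longrightarrow> norm y = 1 \<longrightarrow> (\<exists>g\<in>G. g *v x = y))"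

definition CO :: "(real^'n^'n) set" where
  "CO = {A. \<exists>c B. c \<noteq> 0 \<and> orthogonal_matrix B \<and> A = c *\<^sub>R B}"

end

theory Submission
  imports Defs
begin

typedef (overloaded) 'n sqm = "UNIV :: (real^'n^'n::finite) set"
  morphisms mrep mabs by simp

setup_lifting type_definition_sqm

instantiation sqm :: (finite) real_vector
begin
lift_definition zero_sqm :: "'a sqm" is "0" .
lift_definition plus_sqm :: "'a sqm \<Rightarrow> 'a sqm \<Rightarrow> 'a sqm" is "(+)" .
lift_definition minus_sqm :: "'a sqm \<Rightarrow> 'a sqm \<Rightarrow> 'a sqm" is "(-)" .
lift_definition uminus_sqm :: "'a sqm \<Rightarrow> 'a sqm" is "uminus" .
lift_definition scaleR_sqm :: "real \<Rightarrow> 'a sqm \<Rightarrow> 'a sqm" is "scaleR" .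
instance
  by standard (transfer; simp add: algebra_simps)+
end

instantiation sqm :: (finite) ring_1
begin
lift_definition one_sqm :: "'a sqm" is "mat 1" .
lift_definition times_sqm :: "'a sqm \<Rightarrow> 'a sqm \<Rightarrow> 'a sqm" is "(**)" .
instance
proof
  fix a b c :: "'a sqm"
  show "a * b * c = a * (b * c)" by transfer (simp add: matrix_mul_assoc)
  show "(a + b) * c = a * c + b * c" by transfer (simp add: matrix_matrix_mult_def vec_eq_iff sum.distrib algebra_simps)
  show "a * (b + c) = a * b + a * c" by transfer (simp add: matrix_add_ldistrib)
  show "1 * a = a" by transfer simp
  show "a * 1 = a" by transfer simp
  show "(0::'a sqm) \<noteq> 1" apply transfer
    by (auto simp: vec_eq_iff mat_def)
qed
end

instance sqm :: (finite) real_algebra_1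
proof
  fix a b :: "'a sqm" and r :: real
  show "r *\<^sub>R a * b = r *\<^sub>R (a * b)" by transfer (simp add: scalar_matrix_assoc)
  show "a * r *\<^sub>R b = r *\<^sub>R (a * b)" by transfer (simp add: matrix_scalar_ac scalar_matrix_assoc)
qed

instantiation sqm :: (finite) real_normed_vector
begin
lift_definition norm_sqm :: "'a sqm \<Rightarrow> real" is "\<lambda>A. onorm ((*v) A)" .
definition dist_sqm :: "'a sqm \<Rightarrow> 'a sqm \<Rightarrow> real" where "dist_sqm a b = norm (a - b)"
definition sgn_sqm :: "'a sqm \<Rightarrow> 'a sqm" where "sgn_sqm x = scaleR (inverse (norm x)) x"
definition uniformity_sqm :: "('a sqm \<times> 'a sqm) filter" where
  "uniformity_sqm = (INF e\<in>{0 <..}. principal {(x, y). dist x y < e})"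
definition open_sqm :: "'a sqm set \<Rightarrow> bool" where
  "open_sqm S = (\<forall>x\<in>S. \<forall>\<^sub>F (x', y) in uniformity. x' = x \<longrightarrow> y \<in> S)"
instance
proof
  fix x y :: "'a sqm" and a :: real and S :: "'a sqm set"
  show "dist x y = norm (x - y)" by (simp add: dist_sqm_def)
  show "sgn x = inverse (norm x) *\<^sub>R x" by (simp add: sgn_sqm_def)
  show "(uniformity :: ('a sqm \<times> 'a sqm) filter) = (INF e\<in>{0 <..}. principal {(x, y). dist x y < e})"
    by (simp add: uniformity_sqm_def)
  show "open S = (\<forall>x\<in>S. \<forall>\<^sub>F (x', y) in uniformity. x' = x \<longrightarrow> y \<in> S)"
    by (simp add: open_sqm_def)
  show "(norm x = 0) = (x = 0)"
    apply transfer
    by (simp add: onorm_eq_0 matrix_eq[where B=0])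
  show "norm (x + y) \<le> norm x + norm y"
    apply transfer
    subgoal for A B
    proof -
      have "(*v) (A+B) = (\<lambda>x. A *v x + B *v x)" by (rule ext) (simp add: matrix_vector_mult_add_rdistrib)
      then show ?thesis using onorm_triangle[OF matrix_vector_mul_bounded_linear[of A] matrix_vector_mul_bounded_linear[of B]]
        by simp
    qed
    done
  show "norm (a *\<^sub>R x) = \<bar>a\<bar> * norm x"
    apply transfer
    subgoal for a A
    proof -
      have "(*v) (a *\<^sub>R A) = (\<lambda>x. a *\<^sub>R (A *v x))" by (rule ext) (simp add: scaleR_matrix_vector_assoc)
      then show ?thesis using onorm_scaleR[OF matrix_vector_mul_bounded_linear[of A], of a]
        by simp
    qed
    done
qed
end

instance sqm :: (finite) real_normed_algebra_1
proof
  fix x y :: "'a sqm"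
  show "norm (1::'a sqm) = 1"
  proof transfer
    have "(*v) (mat 1) = (\<lambda>x::real^'a. x)" by (rule ext) simp
    then show "onorm ((*v) (mat 1 :: real^'a^'a)) = 1" by (simp add: onorm_id)
  qed
  show "norm (x * y) \<le> norm x * norm y"
    apply transfer
    using onorm_compose[OF matrix_vector_mul_bounded_linear matrix_vector_mul_bounded_linear]
    by (simp add: o_def matrix_vector_mul_assoc)
qed



lemma norm_mrep_le: "norm (mrep a) \<le> real CARD('n) * real CARD('n) * norm (a::'n::finite sqm)"
proof -
  have c: "\<bar>mrep a $ i $ j\<bar> \<le> norm a" for i j
    by (simp add: norm_sqm.rep_eq matrix_component_le_onorm)
  have r: "norm (mrep a $ i) \<le> real CARD('n) * norm a" for i
  proof -
    have "norm (mrep a $ i) \<le> (\<Sum>j\<in>UNIV. \<bar>mrep a $ i $ j\<bar>)" by (rule norm_le_l1_cart)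
    also have "\<dots> \<le> (\<Sum>j\<in>(UNIV::'n set). norm a)" by (rule sum_mono) (rule c)
    finally show ?thesis by simp
  qed
  have "norm (mrep a) = L2_set (\<lambda>i. norm (mrep a $ i)) UNIV" by (simp add: norm_vec_def)
  also have "\<dots> \<le> (\<Sum>i\<in>UNIV. norm (mrep a $ i))" by (rule L2_set_le_sum) simp
  also have "\<dots> \<le> (\<Sum>i\<in>(UNIV::'n set). real CARD('n) * norm a)" by (rule sum_mono) (rule r)
  finally show ?thesis by simp
qed

lemma norm_le_mrep: "norm (a::'n::finite sqm) \<le> real CARD('n) * real CARD('n) * norm (mrep a)"
proof -
  have "\<bar>mrep a $ i $ j\<bar> \<le> norm (mrep a)" for i j
    using component_le_norm_cart[of "mrep a $ i" j] Finite_Cartesian_Product.norm_nth_le[of "mrep a" i] by linarith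
  then show ?thesis unfolding norm_sqm.rep_eq by (rule onorm_le_matrix_component)
qed

lemma bounded_linear_mrep: "bounded_linear (mrep :: 'n::finite sqm \<Rightarrow> _)"
proof (rule bounded_linear_intro[where K="real CARD('n) * real CARD('n)"])
  fix x y :: "'n sqm" and r :: real
  show "mrep (x + y) = mrep x + mrep y" by transfer simp
  show "mrep (r *\<^sub>R x) = r *\<^sub>R mrep x" by transfer simp
  show "norm (mrep x) \<le> norm x * (real CARD('n) * real CARD('n))" using norm_mrep_le[of x] by (simp add: mult.commute)
qed

lemma bounded_linear_mabs: "bounded_linear (mabs :: real^'n^'n \<Rightarrow> 'n::finite sqm)"
  apply (rule bounded_linear_intro[where K="real CARD('n) * real CARD('n)"])
  apply (simp_all add: plus_sqm.abs_eq scaleR_sqm.abs_eq)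
  using norm_le_mrep[of "mabs x" for x] by (simp add: mabs_inverse mult.commute)

instance sqm :: (finite) banach
proof
  fix X :: "nat \<Rightarrow> 'a sqm"
  assume "Cauchy X"
  then have "Cauchy (\<lambda>n. mrep (X n))" by (rule bounded_linear.Cauchy[OF bounded_linear_mrep])
  then obtain L where "(\<lambda>n. mrep (X n)) \<longlonglongrightarrow> L" using Cauchy_convergent_iff convergent_def by blast
  then have "(\<lambda>n. mabs (mrep (X n))) \<longlonglongrightarrow> mabs L" by (rule bounded_linear.tendsto[OF bounded_linear_mabs])
  then show "convergent X" by (auto simp: mrep_inverse convergent_def)
qed


lemma mrep_power: "mrep (x ^ m) = mat_power (mrep x) m"
  by (induction m) (simp_all add: one_sqm.rep_eq times_sqm.rep_eq)

lemma mat_exp_eq: "mat_exp X = mrep (exp (mabs X :: 'n::finite sqm))"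
proof -
  have sm: "summable (\<lambda>n. (mabs X :: 'n sqm) ^ n /\<^sub>R fact n)" by (rule summable_exp_generic)
  have "mrep (exp (mabs X :: 'n sqm)) = (\<Sum>n. mrep ((mabs X :: 'n sqm) ^ n /\<^sub>R fact n))"
    unfolding exp_def by (rule bounded_linear.suminf[OF bounded_linear_mrep sm])
  also have "\<dots> = mat_exp X"
    unfolding mat_exp_def
    by (simp add: scaleR_sqm.rep_eq mrep_power mabs_inverse divide_inverse)
  finally show ?thesis by simp
qed

lemma exp_scaleR_nat: "exp (of_nat n *\<^sub>R x) = (exp x :: 'a::{real_normed_algebra_1,banach}) ^ n"
proof (induction n)
  case (Suc n)
  have "exp (of_nat (Suc n) *\<^sub>R x) = exp (x + of_nat n *\<^sub>R x)" by (simp add: algebra_simps)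
  also have "\<dots> = exp x * exp (of_nat n *\<^sub>R x)"
    by (rule exp_add_commuting) (simp add: mult_scaleR_left mult_scaleR_right)
  finally show ?case using Suc by simp
qed simp

lemma exp_remainder_bound:
  fixes z :: "'a::{real_normed_algebra_1,banach}"
  assumes "norm z \<le> 1"
  shows "norm (exp z - 1 - z) \<le> norm z ^ 2"
proof -
  let ?f = "\<lambda>n. inverse (fact (n + 2)) *\<^sub>R (z ^ (n + 2))"
  let ?g = "\<lambda>n. inverse (fact (n + 2)) * (norm z ^ (n + 2))"
  have sg: "summable ?g"
    using summable_ignore_initial_segment[OF summable_exp[of "norm z"], of 2] by simp
  have le: "norm (?f n) \<le> ?g n" for n
  proof -
    have "norm (z ^ (n+2)) \<le> norm z ^ (n+2)" by (rule norm_power_ineq)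
    then show ?thesis by (simp add: mult_left_mono del: power_Suc)
  qed
  have sn: "summable (\<lambda>n. norm (?f n))"
    by (rule summable_comparison_test[OF _ sg]) (use le in auto)
  have "norm (exp z - 1 - z) = norm (suminf ?f)"
    by (simp add: exp_first_two_terms[of z])
  also have "\<dots> \<le> (\<Sum>n. norm (?f n))" by (rule summable_norm[OF sn])
  also have "\<dots> \<le> suminf ?g" by (rule suminf_le[OF le sn sg])
  also have "suminf ?g = exp (norm z) - 1 - norm z"
    using exp_first_two_terms[of "norm z"] by simp
  also have "\<dots> \<le> norm z ^ 2" using exp_bound[of "norm z"] assms by simp
  finally show ?thesis .
qed


lemma exp_deriv0:
  fixes y :: "'a::{real_normed_algebra_1,banach}"
  shows "((\<lambda>t::real. (1/t) *\<^sub>R (exp (t *\<^sub>R y) - 1)) \<longlongrightarrow> y) (at 0)"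
proof (rule LIM_zero_cancel, rule Lim_null_comparison)
  show "((\<lambda>t. \<bar>t\<bar> * norm y ^ 2) \<longlongrightarrow> 0) (at (0::real))"
    using tendsto_mult[OF tendsto_rabs[OF tendsto_ident_at[of 0 UNIV]] tendsto_const, of "norm y ^ 2"] by simp
  have "\<forall>t. t \<noteq> 0 \<and> dist t 0 < 1 / (norm y + 1) \<longrightarrow>
      norm ((1/t) *\<^sub>R (exp (t *\<^sub>R y) - 1) - y) \<le> \<bar>t\<bar> * norm y ^ 2"
  proof (intro allI impI)
    fix t :: real assume t: "t \<noteq> 0 \<and> dist t 0 < 1 / (norm y + 1)"
    have p: "0 < norm y + 1" using norm_ge_zero[of y] by linarith
    have "\<bar>t\<bar> * (norm y + 1) < 1" using t p by (metis dist_real_def diff_zero pos_less_divide_eq)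
    then have n1: "norm (t *\<^sub>R y) \<le> 1" by (simp add: algebra_simps)
    have "(1/t) *\<^sub>R (exp (t *\<^sub>R y) - 1) - y = (1/t) *\<^sub>R (exp (t *\<^sub>R y) - 1 - t *\<^sub>R y)"
      using t by (simp add: algebra_simps)
    then have "norm ((1/t) *\<^sub>R (exp (t *\<^sub>R y) - 1) - y) = norm (exp (t *\<^sub>R y) - 1 - t *\<^sub>R y) / \<bar>t\<bar>"
      by simp
    also have "\<dots> \<le> norm (t *\<^sub>R y) ^ 2 / \<bar>t\<bar>"
      by (rule divide_right_mono[OF exp_remainder_bound[OF n1]]) simp
    also have "\<dots> = \<bar>t\<bar> * norm y ^ 2" using t by (simp add: power2_eq_square)
    finally show "norm ((1/t) *\<^sub>R (exp (t *\<^sub>R y) - 1) - y) \<le> \<bar>t\<bar> * norm y ^ 2" .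
  qed
  then show "\<forall>\<^sub>F t in at 0. norm ((1/t) *\<^sub>R (exp (t *\<^sub>R y) - 1) - y) \<le> \<bar>t\<bar> * norm y ^ 2"
    unfolding eventually_at by (intro exI[of _ "1 / (norm y + 1)"]) (auto simp: add_pos_nonneg, smt (verit) norm_ge_zero)
qed

lemma power_diff_bound:
  fixes a b :: "'a::real_normed_algebra_1"
  assumes "norm a \<le> K" "norm b \<le> K" "1 \<le> K"
  shows "norm (a ^ m - b ^ m) \<le> real m * K ^ m * norm (a - b)"
proof (induction m)
  case (Suc m)
  have eq: "a ^ Suc m - b ^ Suc m = a * (a ^ m - b ^ m) + (a - b) * b ^ m"
    by (simp add: algebra_simps)
  have bm: "norm (b ^ m) \<le> K ^ m"
    using norm_power_ineq[of b m] power_mono[OF assms(2) norm_ge_zero, of m] by linarith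
  have "norm (a ^ Suc m - b ^ Suc m) \<le> norm a * norm (a ^ m - b ^ m) + norm (a - b) * norm (b ^ m)"
    unfolding eq by (rule order_trans[OF norm_triangle_ineq add_mono[OF norm_mult_ineq norm_mult_ineq]])
  also have "\<dots> \<le> K * (real m * K ^ m * norm (a - b)) + norm (a - b) * K ^ m"
    using assms(3) by (intro add_mono mult_mono Suc assms bm) auto
  also have "\<dots> \<le> real (Suc m) * K ^ Suc m * norm (a - b)"
  proof -
    have "K ^ m \<le> K ^ Suc m" using assms(3) by (simp add: power_increasing)
    then have "norm (a - b) * K ^ m \<le> norm (a - b) * K ^ Suc m" by (simp add: mult_left_mono)
    then show ?thesis by (simp add: algebra_simps)
  qed
  finally show ?case .
qed simp

lemma exp_lipschitz:
  fixes x y :: "'a::{real_normed_algebra_1,banach}"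
  assumes "norm x \<le> K" "norm y \<le> K" "1 \<le> K"
  shows "norm (exp y - exp x) \<le> exp (2 * K) * norm (y - x)"
proof -
  let ?f = "\<lambda>n. (y ^ n - x ^ n) /\<^sub>R fact n"
  let ?g = "\<lambda>n. (2 * K) ^ n / fact n * norm (y - x)"
  have sg: "summable ?g"
    using summable_mult2[OF summable_exp[of "2*K"], of "norm (y - x)"] by (simp add: field_simps)
  have le: "norm (?f n) \<le> ?g n" for n
  proof -
    have "norm (y ^ n - x ^ n) \<le> real n * K ^ n * norm (y - x)"
      by (rule power_diff_bound[OF assms(2,1,3)])
    also have "\<dots> \<le> 2 ^ n * K ^ n * norm (y - x)"
    proof -
      have "real n \<le> 2 ^ n" using less_exp[of n] by (simp add: of_nat_less_numeral_power_cancel_iff less_imp_le)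
      then show ?thesis using assms(3) by (intro mult_right_mono) auto
    qed
    finally have "norm (y ^ n - x ^ n) \<le> (2 * K) ^ n * norm (y - x)" by (simp add: power_mult_distrib)
    then have "norm (y ^ n - x ^ n) / fact n \<le> (2 * K) ^ n * norm (y - x) / fact n"
      by (rule divide_right_mono) simp
    moreover have "norm (?f n) = norm (y ^ n - x ^ n) / fact n" by (simp add: divide_inverse mult.commute)
    moreover have "?g n = (2 * K) ^ n * norm (y - x) / fact n" by simp
    ultimately show ?thesis by simp
  qed
  have sn: "summable (\<lambda>n. norm (?f n))"
    by (rule summable_comparison_test[OF _ sg]) (use le in auto)
  have "exp y - exp x = suminf ?f"
    unfolding exp_def using summable_exp_generic[of y] summable_exp_generic[of x]
    by (simp add: suminf_diff scaleR_diff_right)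
  then have "norm (exp y - exp x) \<le> (\<Sum>n. norm (?f n))" using summable_norm[OF sn] by simp
  also have "\<dots> \<le> suminf ?g" by (rule suminf_le[OF le sn sg])
  also have "suminf ?g = exp (2 * K) * norm (y - x)"
    using suminf_mult2[OF summable_exp[of "2*K"], of "norm (y - x)"]
    by (simp add: exp_def field_simps)
  finally show ?thesis .
qed

lemma tendsto_exp_banach:
  fixes f :: "_ \<Rightarrow> 'a::{real_normed_algebra_1,banach}"
  assumes "(f \<longlongrightarrow> a) F"
  shows "((\<lambda>n. exp (f n)) \<longlongrightarrow> exp a) F"
proof (rule LIM_zero_cancel, rule Lim_null_comparison)
  let ?K = "norm a + 1"
  show "((\<lambda>n. exp (2 * ?K) * norm (f n - a)) \<longlongrightarrow> 0) F"
    using tendsto_mult[OF tendsto_const tendsto_norm[OF LIM_zero[OF assms]], of "exp (2 * ?K)"] by simp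
  have "eventually (\<lambda>n. norm (f n) < ?K) F"
    using order_tendstoD(2)[OF tendsto_norm[OF assms], of ?K] by simp
  then show "\<forall>\<^sub>F n in F. norm (exp (f n) - exp a) \<le> exp (2 * ?K) * norm (f n - a)"
    by eventually_elim (rule exp_lipschitz, auto)
qed

lemma power_exp_limit:
  fixes W :: "nat \<Rightarrow> 'a::{real_normed_algebra_1,banach}" and e :: "nat \<Rightarrow> real" and m :: "nat \<Rightarrow> nat"
  assumes e0: "\<And>n. e n > 0" and e: "e \<longlonglongrightarrow> 0" and W: "W \<longlonglongrightarrow> Z"
    and m: "(\<lambda>n. real (m n) * e n) \<longlonglongrightarrow> t"
  shows "(\<lambda>n. (1 + e n *\<^sub>R W n) ^ m n) \<longlonglongrightarrow> exp (t *\<^sub>R Z)"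
proof -
  let ?a = "\<lambda>n. 1 + e n *\<^sub>R W n" and ?b = "\<lambda>n. exp (e n *\<^sub>R W n)"
  have bm: "?b n ^ m n = exp ((real (m n) * e n) *\<^sub>R W n)" for n
    using exp_scaleR_nat[of "m n" "e n *\<^sub>R W n"] by simp
  have lim_b: "(\<lambda>n. ?b n ^ m n) \<longlonglongrightarrow> exp (t *\<^sub>R Z)"
    unfolding bm by (intro tendsto_exp_banach tendsto_scaleR m W)
  have ew: "(\<lambda>n. e n * norm (W n)) \<longlonglongrightarrow> 0"
    using tendsto_mult[OF e tendsto_norm[OF W]] by simp
  then have ev: "eventually (\<lambda>n. e n * norm (W n) \<le> 1) sequentially"
    using order_tendstoD(2)[OF ew, of 1] by (auto elim: eventually_mono)
  let ?g = "\<lambda>n. (real (m n) * e n) * e n * norm (W n) ^ 2 * exp (real (m n) * e n * norm (W n))"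
  have lim_g: "?g \<longlonglongrightarrow> t * 0 * norm Z ^ 2 * exp (t * norm Z)"
    by (intro tendsto_intros m e W)
  have "(\<lambda>n. ?a n ^ m n - ?b n ^ m n) \<longlonglongrightarrow> 0"
  proof (rule Lim_null_comparison)
    show "?g \<longlonglongrightarrow> 0" using lim_g by simp
    show "\<forall>\<^sub>F n in sequentially. norm (?a n ^ m n - ?b n ^ m n) \<le> ?g n"
      using ev
    proof eventually_elim
      case (elim n)
      define K where "K = exp (e n * norm (W n))"
      have K1: "1 \<le> K" unfolding K_def using e0[of n] by simp
      have na: "norm (?a n) \<le> K"
      proof -
        have "norm (?a n) \<le> 1 + e n * norm (W n)"
          using norm_triangle_ineq[of 1 "e n *\<^sub>R W n"] e0[of n] by simp
        also have "\<dots> \<le> K" unfolding K_def by (rule exp_ge_add_one_self)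
        finally show ?thesis .
      qed
      have nb: "norm (?b n) \<le> K" unfolding K_def
        using norm_exp[of "e n *\<^sub>R W n"] e0[of n] by simp
      have d: "norm (?a n - ?b n) \<le> (e n * norm (W n)) ^ 2"
      proof -
        have "norm (?a n - ?b n) = norm (exp (e n *\<^sub>R W n) - 1 - e n *\<^sub>R W n)"
          by (simp add: norm_minus_commute algebra_simps)
        also have "\<dots> \<le> norm (e n *\<^sub>R W n) ^ 2"
          by (rule exp_remainder_bound) (use elim e0[of n] in simp)
        finally show ?thesis using e0[of n] by simp
      qed
      have Km: "K ^ m n = exp (real (m n) * e n * norm (W n))"
        unfolding K_def using exp_scaleR_nat[of "m n" "e n * norm (W n)"] by (simp add: mult.assoc)
      have "norm (?a n ^ m n - ?b n ^ m n) \<le> real (m n) * K ^ m n * norm (?a n - ?b n)"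
        by (rule power_diff_bound[OF na nb K1])
      also have "\<dots> \<le> real (m n) * K ^ m n * (e n * norm (W n)) ^ 2"
        by (rule mult_left_mono[OF d]) (use K1 in simp)
      also have "\<dots> = ?g n" unfolding Km by (simp add: power2_eq_square algebra_simps)
      finally show ?case .
    qed
  qed
  from tendsto_add[OF this lim_b] show ?thesis by simp
qed



lemma mat_deriv0:
  fixes Y :: "real^'n^'n"
  shows "((\<lambda>t::real. (1/t) *\<^sub>R (mat_exp (t *\<^sub>R Y) - mat 1)) \<longlongrightarrow> Y) (at 0)"
proof -
  have "((\<lambda>t::real. mrep ((1/t) *\<^sub>R (exp (t *\<^sub>R (mabs Y :: 'n sqm)) - 1))) \<longlongrightarrow> mrep (mabs Y :: 'n sqm)) (at 0)"
    by (rule bounded_linear.tendsto[OF bounded_linear_mrep exp_deriv0])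
  moreover have "mrep ((1/t) *\<^sub>R (exp (t *\<^sub>R (mabs Y :: 'n sqm)) - 1)) = (1/t) *\<^sub>R (mat_exp (t *\<^sub>R Y) - mat 1)" for t
    by (simp add: mat_exp_eq scaleR_sqm.rep_eq minus_sqm.rep_eq one_sqm.rep_eq scaleR_sqm.abs_eq[symmetric] mabs_inverse)
  ultimately show ?thesis by (simp add: mabs_inverse)
qed

lemma mat_power_limit:
  fixes W :: "nat \<Rightarrow> real^'n^'n" and e :: "nat \<Rightarrow> real" and m :: "nat \<Rightarrow> nat"
  assumes "\<And>n. e n > 0" "e \<longlonglongrightarrow> 0" "W \<longlonglongrightarrow> Z"
    and "(\<lambda>n. real (m n) * e n) \<longlonglongrightarrow> t"
  shows "(\<lambda>n. mat_power (mat 1 + e n *\<^sub>R W n) (m n)) \<longlonglongrightarrow> mat_exp (t *\<^sub>R Z)"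
proof -
  have W': "(\<lambda>n. mabs (W n) :: 'n sqm) \<longlonglongrightarrow> mabs Z"
    by (rule bounded_linear.tendsto[OF bounded_linear_mabs assms(3)])
  have "(\<lambda>n. mrep ((1 + e n *\<^sub>R (mabs (W n) :: 'n sqm)) ^ m n)) \<longlonglongrightarrow> mrep (exp (t *\<^sub>R (mabs Z :: 'n sqm)))"
    by (rule bounded_linear.tendsto[OF bounded_linear_mrep power_exp_limit[OF assms(1,2) W' assms(4)]])
  moreover have "mrep ((1 + e n *\<^sub>R (mabs (W n) :: 'n sqm)) ^ m n) = mat_power (mat 1 + e n *\<^sub>R W n) (m n)" for n
    by (simp add: mrep_power plus_sqm.rep_eq scaleR_sqm.rep_eq one_sqm.rep_eq mabs_inverse)
  moreover have "mrep (exp (t *\<^sub>R (mabs Z :: 'n sqm))) = mat_exp (t *\<^sub>R Z)"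
    by (simp add: mat_exp_eq scaleR_sqm.abs_eq[symmetric])
  ultimately show ?thesis by simp
qed

lemma mat_exp_inverse:
  fixes Z :: "real^'n^'n"
  shows "mat_exp (t *\<^sub>R Z) ** mat_exp ((-t) *\<^sub>R Z) = mat 1"
proof -
  have "exp (t *\<^sub>R (mabs Z :: 'n sqm)) * exp (- (t *\<^sub>R mabs Z)) = 1" by (rule exp_minus_inverse)
  then have "mrep (exp (t *\<^sub>R (mabs Z :: 'n sqm)) * exp (- (t *\<^sub>R mabs Z))) = mat 1"
    by (simp add: one_sqm.rep_eq)
  then show ?thesis
    by (simp add: mat_exp_eq times_sqm.rep_eq scaleR_sqm.abs_eq[symmetric] uminus_sqm.abs_eq[symmetric])
qed

lemma mat_power_fix:
  fixes Z :: "real^'n^'n"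
  assumes "Z *v x = 0"
  shows "mat_power Z m *v x = (if m = 0 then x else 0)"
proof (induction m)
  case (Suc m)
  then show ?case using assms by (cases m) (simp_all add: matrix_vector_mul_assoc[symmetric])
qed simp

lemma bounded_linear_mv: "bounded_linear (\<lambda>M::real^'n^'n. M *v v)"
proof (rule bounded_linear_intro[where K="real CARD('n) * real CARD('n) * norm v"])
  fix M N :: "real^'n^'n" and r :: real
  show "(M + N) *v v = M *v v + N *v v" by (simp add: matrix_vector_mult_add_rdistrib)
  show "(r *\<^sub>R M) *v v = r *\<^sub>R (M *v v)" by (simp add: scaleR_matrix_vector_assoc)
  have "norm (M *v v) \<le> onorm ((*v) M) * norm v"
    by (rule onorm[OF matrix_vector_mul_bounded_linear])
  also have "onorm ((*v) M) = norm (mabs M :: 'n sqm)" by (simp add: norm_sqm.abs_eq)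
  also have "norm (mabs M :: 'n sqm) \<le> real CARD('n) * real CARD('n) * norm M"
    using norm_le_mrep[of "mabs M :: 'n sqm"] by (simp add: mabs_inverse)
  finally show "norm (M *v v) \<le> norm M * (real CARD('n) * real CARD('n) * norm v)"
    by (simp add: mult_right_mono algebra_simps)
qed

lemma mat_exp_fix:
  fixes Z :: "real^'n^'n"
  assumes "Z *v x = 0"
  shows "mat_exp Z *v x = x"
proof -
  have "(\<lambda>n. mrep ((mabs Z :: 'n sqm) ^ n /\<^sub>R fact n)) sums mrep (exp (mabs Z :: 'n sqm))"
    by (rule bounded_linear.sums[OF bounded_linear_mrep exp_converges])
  then have "(\<lambda>n. (1 / fact n) *\<^sub>R mat_power Z n) sums mat_exp Z"
    by (simp add: mat_exp_eq scaleR_sqm.rep_eq mrep_power mabs_inverse divide_inverse)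
  then have "(\<lambda>n. ((1 / fact n) *\<^sub>R mat_power Z n) *v x) sums (mat_exp Z *v x)"
    by (rule bounded_linear.sums[OF bounded_linear_mv])
  moreover have "(\<lambda>n. ((1 / fact n) *\<^sub>R mat_power Z n) *v x) = (\<lambda>n. if n = 0 then x else 0)"
    by (rule ext) (simp add: scaleR_matrix_vector_assoc[symmetric] mat_power_fix[OF assms])
  ultimately have "(\<lambda>n. if n = 0 then x else 0) sums (mat_exp Z *v x)" by simp
  moreover have "(\<lambda>n. if n = 0 then x else 0) sums x"
    using sums_single[of 0 "\<lambda>_. x"] by simp
  ultimately show ?thesis using sums_unique2 by blast
qed

lemma mv_inner: "((A::real^'n^'n) *v x) \<bullet> z = x \<bullet> (transpose A *v z)"
  by (metis dot_lmul_matrix vector_transpose_matrix)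

lemma orth_norm:
  assumes "orthogonal_matrix (U::real^'n^'n)"
  shows "norm (U *v w) = norm w"
proof -
  have "(U *v w) \<bullet> (U *v w) = w \<bullet> w"
    using assms by (simp add: mv_inner matrix_vector_mul_assoc orthogonal_matrix)
  then show ?thesis by (simp add: norm_eq_sqrt_inner)
qed

lemma inv_unique:
  fixes A B :: "real^'n^'n"
  assumes "A ** B = mat 1"
  shows "matrix_inv A = B"
proof -
  have BA: "B ** A = mat 1" using assms matrix_left_right_inverse by blast
  have "A ** matrix_inv A = mat 1 \<and> matrix_inv A ** A = mat 1"
    unfolding matrix_inv_def by (rule someI[of _ B]) (use assms BA in simp)
  then have "matrix_inv A = matrix_inv A ** (A ** B)" using assms by simp
  also have "\<dots> = B" using \<open>A ** matrix_inv A = mat 1 \<and> matrix_inv A ** A = mat 1\<close>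
    by (simp add: matrix_mul_assoc)
  finally show ?thesis .
qed

lemma inv_props:
  fixes A :: "real^'n^'n"
  assumes "invertible A"
  shows "A ** matrix_inv A = mat 1" "matrix_inv A ** A = mat 1"
proof -
  obtain B where "A ** B = mat 1" using assms invertible_def by blast
  then have "matrix_inv A = B" by (rule inv_unique)
  then show "A ** matrix_inv A = mat 1" "matrix_inv A ** A = mat 1"
    using \<open>A ** B = mat 1\<close> matrix_left_right_inverse by auto
qed

lemma orth_inv: "orthogonal_matrix (U::real^'n^'n) \<Longrightarrow> matrix_inv U = transpose U"
  by (rule inv_unique) (simp add: orthogonal_matrix_def)

lemma row_mult: "((M::real^'n^'n) ** U) $ i = transpose U *v (M $ i)"
  by (simp add: vec_eq_iff matrix_matrix_mult_def matrix_vector_mult_def transpose_def mult.commute)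

lemma norm_mult_orth:
  fixes M :: "real^'n^'n"
  assumes "orthogonal_matrix (U::real^'n^'n)"
  shows "norm (M ** U) = norm M"
proof -
  have "norm ((M ** U) $ i) = norm (M $ i)" for i
    using orth_norm[of "transpose U" "M $ i"] assms row_mult[of M U i] by simp
  then show ?thesis by (simp add: norm_vec_def)
qed

lemma orth_bound:
  assumes "orthogonal_matrix (U::real^'n^'n)"
  shows "norm U \<le> real CARD('n)"
proof -
  have r: "norm (U $ i) = 1" for i
    using assms unfolding orthogonal_matrix_orthonormal_rows by (metis row_def vec_lambda_eta)
  have "norm U = L2_set (\<lambda>i. norm (U $ i)) UNIV" by (simp add: norm_vec_def)
  also have "\<dots> \<le> (\<Sum>i\<in>UNIV. norm (U $ i))" by (rule L2_set_le_sum) simp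
  finally show ?thesis by (simp add: r)
qed



lemma SO_orth: "M \<in> SO \<Longrightarrow> orthogonal_matrix M"
  by (simp add: SO_def)

lemma skew_form:
  fixes G :: "(real^'n^'n) set"
  assumes "G \<subseteq> SO" "X \<in> lie_algebra G"
  shows "v \<bullet> (X *v v) = 0"
proof -
  define D where "D t = (1/t) *\<^sub>R (mat_exp (t *\<^sub>R X) - mat 1)" for t :: real
  have "(D \<longlongrightarrow> X) (at 0)" unfolding D_def by (rule mat_deriv0)
  then have Dv: "((\<lambda>t. D t *v v) \<longlongrightarrow> X *v v) (at 0)"
    by (rule bounded_linear.tendsto[OF bounded_linear_mv])
  define f where "f t = 2 * (v \<bullet> (D t *v v)) + t * ((D t *v v) \<bullet> (D t *v v))" for t
  have lim: "(f \<longlongrightarrow> 2 * (v \<bullet> (X *v v)) + 0 * ((X *v v) \<bullet> (X *v v))) (at 0)"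
    unfolding f_def by (intro tendsto_intros Dv)
  have ev: "eventually (\<lambda>t. 0 = f t) (at 0)"
    unfolding eventually_at_filter
  proof (intro always_eventually allI impI)
    fix t :: real assume "t \<noteq> 0"
    have "mat_exp (t *\<^sub>R X) \<in> G" using assms(2) by (simp add: lie_algebra_def)
    then have o: "orthogonal_matrix (mat_exp (t *\<^sub>R X))" using assms(1) SO_orth by blast
    have E: "mat_exp (t *\<^sub>R X) = mat 1 + t *\<^sub>R D t" using \<open>t \<noteq> 0\<close> by (simp add: D_def)
    have "norm (mat_exp (t *\<^sub>R X) *v v) = norm v" by (rule orth_norm[OF o])
    then have "(mat_exp (t *\<^sub>R X) *v v) \<bullet> (mat_exp (t *\<^sub>R X) *v v) = v \<bullet> v"
      by (simp add: norm_eq_sqrt_inner)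
    then have "(v + t *\<^sub>R (D t *v v)) \<bullet> (v + t *\<^sub>R (D t *v v)) = v \<bullet> v"
      unfolding E by (simp add: matrix_vector_mult_add_rdistrib scaleR_matrix_vector_assoc[symmetric])
    then have "t * f t = 0"
      by (simp add: f_def inner_add_left inner_add_right algebra_simps inner_commute power2_eq_square)
    then show "0 = f t" using \<open>t \<noteq> 0\<close> by simp
  qed
  have "(f \<longlongrightarrow> 0) (at 0)" by (rule Lim_transform_eventually[OF tendsto_const ev])
  from tendsto_unique[OF at_neq_bot lim this] show ?thesis by simp
qed


lemma matrix_sub_rdistrib: "((A::real^'n^'n) - B) ** C = A ** C - B ** C"
  by (simp add: matrix_matrix_mult_def vec_eq_iff sum_subtractf algebra_simps)

lemma mat_power_in:
  assumes "matrix_subgroup G" "M \<in> G"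
  shows "mat_power M m \<in> G"
  using assms by (induction m) (auto simp: matrix_subgroup_def)

lemma core:
  fixes G :: "(real^'n^'n) set" and x u :: "real^'n"
  assumes sub: "matrix_subgroup G" and SOG: "G \<subseteq> SO" and cl: "closed G"
    and tr: "transitive_on_sphere G"
    and x1: "norm x = 1" and u1: "norm u = 1" and ux: "u \<bullet> x = 0"
    and perp: "\<forall>X\<in>lie_algebra G. u \<bullet> (X *v x) = 0"
  shows False
proof -
  have orthG: "\<And>M. M \<in> G \<Longrightarrow> orthogonal_matrix M" using SOG SO_orth by blast
  have xx: "x \<bullet> x = 1" using x1 by (simp add: norm_eq_sqrt_inner)
  have uu: "u \<bullet> u = 1" using u1 by (simp add: norm_eq_sqrt_inner)
  have xu: "x \<bullet> u = 0" using ux by (simp add: inner_commute)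
  define s where "s n = inverse (real (Suc n))" for n
  have s_pos: "0 < s n" for n by (simp add: s_def)
  have s_le: "s n \<le> 1" for n by (simp add: s_def inverse_le_1_iff)
  have s_lim: "s \<longlonglongrightarrow> 0" unfolding s_def by (rule LIMSEQ_inverse_real_of_nat)
  have sin_pos: "0 < sin (s n)" for n
    using s_pos[of n] s_le[of n] pi_gt3 by (intro sin_gt_zero) auto
  have cos_nn: "0 \<le> cos (s n)" for n
    using s_pos[of n] s_le[of n] pi_gt3 by (intro cos_ge_zero) auto
  define y where "y n = cos (s n) *\<^sub>R x + sin (s n) *\<^sub>R u" for n
  have y1: "norm (y n) = 1" for n
  proof -
    have "y n \<bullet> y n = (cos (s n))^2 + (sin (s n))^2"
      by (simp add: y_def inner_add_left inner_add_right xx uu xu ux power2_eq_square)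
    then show ?thesis by (simp add: norm_eq_sqrt_inner)
  qed
  have y_lim: "y \<longlonglongrightarrow> x"
  proof -
    have "y \<longlonglongrightarrow> cos 0 *\<^sub>R x + sin 0 *\<^sub>R u"
      unfolding y_def by (intro tendsto_intros s_lim)
    then show ?thesis by simp
  qed
  have uy: "u \<bullet> y n = sin (s n)" for n
    by (simp add: y_def inner_add_right uu ux)
  have yx_bound: "norm (y n - x) \<le> 2 * sin (s n)" for n
  proof -
    have sc: "(sin (s n))^2 + (cos (s n))^2 = 1" by simp
    have c1: "cos (s n) \<le> 1" by simp
    have s1: "sin (s n) \<le> 1" by simp
    have "1 - cos (s n) \<le> 1 - (cos (s n))^2"
      using cos_nn[of n] c1 by (simp add: power2_eq_square mult_left_le_one_le)
    also have "\<dots> = (sin (s n))^2" using sc by linarith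
    also have "\<dots> \<le> sin (s n)" using sin_pos[of n] s1 by (simp add: power2_eq_square mult_left_le_one_le)
    finally have cb: "1 - cos (s n) \<le> sin (s n)" .
    have "y n - x = (cos (s n) - 1) *\<^sub>R x + sin (s n) *\<^sub>R u" by (simp add: y_def algebra_simps)
    then have "norm (y n - x) \<le> norm ((cos (s n) - 1) *\<^sub>R x) + norm (sin (s n) *\<^sub>R u)"
      by (metis norm_triangle_ineq)
    also have "\<dots> = (1 - cos (s n)) + sin (s n)" using x1 u1 c1 sin_pos[of n] by simp
    finally show ?thesis using cb by simp
  qed
  have "\<forall>n. \<exists>g\<in>G. g *v x = y n" using tr x1 y1 unfolding transitive_on_sphere_def by blast
  then obtain gs where gs: "\<And>n. gs n \<in> G" "\<And>n. gs n *v x = y n" by metis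
  have bG: "bounded G"
    unfolding bounded_iff using orth_bound orthG by blast
  have cG: "compact G" using bG cl by (simp add: compact_eq_bounded_closed)
  define H where "H = G \<inter> {h. h *v x = x}"
  have clx: "closed {h :: real^'n^'n. h *v x = x}"
    by (rule closed_Collect_eq) (auto intro!: linear_continuous_on bounded_linear_mv)
  have cH: "compact H" unfolding H_def using cG clx by (rule compact_Int_closed)
  have IH: "mat 1 \<in> H" using sub by (simp add: H_def matrix_subgroup_def)
  have "\<forall>n. \<exists>h\<in>H. \<forall>h'\<in>H. norm (gs n - h) \<le> norm (gs n - h')"
  proof
    fix n
    show "\<exists>h\<in>H. \<forall>h'\<in>H. norm (gs n - h) \<le> norm (gs n - h')"
      by (rule continuous_attains_inf[OF cH]) (use IH in \<open>auto intro!: continuous_intros\<close>)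
  qed
  then obtain hs where hsH: "\<And>n. hs n \<in> H" and hsmin: "\<And>n h'. h' \<in> H \<Longrightarrow> norm (gs n - hs n) \<le> norm (gs n - h')"
    by metis
  have hsG: "hs n \<in> G" and hsx: "hs n *v x = x" for n using hsH[of n] by (auto simp: H_def)
  have hso: "orthogonal_matrix (hs n)" for n using orthG hsG by blast
  define k where "k n = gs n ** transpose (hs n)" for n
  have kG: "k n \<in> G" for n
  proof -
    have "matrix_inv (hs n) \<in> G" using sub hsG[of n] by (simp add: matrix_subgroup_def)
    then have "transpose (hs n) \<in> G" using orth_inv[OF hso[of n]] by simp
    then show ?thesis using sub gs(1)[of n] by (simp add: k_def matrix_subgroup_def)
  qed
  have kx: "k n *v x = y n" for n
  proof -
    have "transpose (hs n) *v x = transpose (hs n) *v (hs n *v x)" by (simp add: hsx)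
    also have "\<dots> = x" using hso[of n] by (simp add: matrix_vector_mul_assoc orthogonal_matrix)
    finally show ?thesis by (simp add: k_def matrix_vector_mul_assoc[symmetric] gs(2))
  qed
  have hht: "hs n ** transpose (hs n) = mat 1" for n using hso[of n] by (simp add: orthogonal_matrix_def)
  have kmin: "norm (k n - mat 1) \<le> norm (k n - h)" if hH: "h \<in> H" for n h
  proof -
    have hG: "h \<in> G" and hx: "h *v x = x" using hH by (auto simp: H_def)
    have hh: "h ** hs n \<in> H"
      using sub hG hsG[of n] hx hsx[of n] by (simp add: H_def matrix_subgroup_def matrix_vector_mul_assoc[symmetric])
    have e1: "k n - mat 1 = (gs n - hs n) ** transpose (hs n)"
      by (simp add: k_def matrix_sub_rdistrib hht)
    have e2: "k n - h = (gs n - h ** hs n) ** transpose (hs n)"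
      by (simp add: k_def matrix_sub_rdistrib matrix_mul_assoc[symmetric] hht)
    have "norm (k n - mat 1) = norm (gs n - hs n)"
      unfolding e1 by (rule norm_mult_orth) (simp add: hso)
    also have "\<dots> \<le> norm (gs n - h ** hs n)" by (rule hsmin[OF hh])
    also have "\<dots> = norm (k n - h)"
      unfolding e2 by (rule norm_mult_orth[symmetric]) (simp add: hso)
    finally show ?thesis .
  qed
  have kdist: "norm (k n - mat 1) = norm (gs n - hs n)" for n
  proof -
    have e1: "k n - mat 1 = (gs n - hs n) ** transpose (hs n)"
      by (simp add: k_def matrix_sub_rdistrib hht)
    show ?thesis unfolding e1 by (rule norm_mult_orth) (simp add: hso)
  qed
  define e where "e n = norm (k n - mat 1)" for n
  have e_pos: "0 < e n" for n
  proof -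
    have "k n \<noteq> mat 1"
    proof
      assume "k n = mat 1"
      then have "y n = x" using kx[of n] by simp
      then show False using uy[of n] sin_pos[of n] ux by simp
    qed
    then show ?thesis by (simp add: e_def)
  qed
  define Zs where "Zs n = (1 / e n) *\<^sub>R (k n - mat 1)" for n
  have Zs1: "norm (Zs n) = 1" for n using e_pos[of n] by (simp add: Zs_def e_def)
  have kZ: "k n = mat 1 + e n *\<^sub>R Zs n" for n using e_pos[of n] by (simp add: Zs_def)
  obtain g0 r1 where g0G: "g0 \<in> G" and r1: "strict_mono r1" and g0lim: "(gs \<circ> r1) \<longlonglongrightarrow> g0"
    using seq_compactE[OF compact_imp_seq_compact[OF cG], of gs] gs(1) by metis
  have g0x: "g0 *v x = x"
  proof -
    have "(\<lambda>n. (gs \<circ> r1) n *v x) \<longlonglongrightarrow> g0 *v x"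
      by (rule bounded_linear.tendsto[OF bounded_linear_mv g0lim])
    moreover have "(\<lambda>n. (gs \<circ> r1) n *v x) \<longlonglongrightarrow> x"
      using LIMSEQ_subseq_LIMSEQ[OF y_lim r1] by (simp add: o_def gs(2))
    ultimately show ?thesis using LIMSEQ_unique by blast
  qed
  have g0H: "g0 \<in> H" using g0G g0x by (simp add: H_def)
  have er1: "(e \<circ> r1) \<longlonglongrightarrow> 0"
  proof (rule Lim_null_comparison)
    show "\<forall>\<^sub>F n in sequentially. norm ((e \<circ> r1) n) \<le> norm ((gs \<circ> r1) n - g0)"
      using hsmin[OF g0H] by (simp add: e_def kdist)
    show "(\<lambda>n. norm ((gs \<circ> r1) n - g0)) \<longlonglongrightarrow> 0"
      using tendsto_norm[OF LIM_zero[OF g0lim]] by simp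
  qed
  have "\<forall>n. (Zs \<circ> r1) n \<in> sphere 0 1" using Zs1 by simp
  then obtain Z r2 where Zsph: "Z \<in> sphere (0::real^'n^'n) 1" and r2: "strict_mono r2"
    and Zlim0: "((Zs \<circ> r1) \<circ> r2) \<longlonglongrightarrow> Z"
    using seq_compactE[OF compact_imp_seq_compact[OF compact_sphere[of "0::real^'n^'n" 1]]] by metis
  have Z1: "norm Z = 1" using Zsph by simp
  define \<sigma> where "\<sigma> = r1 \<circ> r2"
  have eslim: "(\<lambda>n. e (\<sigma> n)) \<longlonglongrightarrow> 0"
    using LIMSEQ_subseq_LIMSEQ[OF er1 r2] by (simp add: \<sigma>_def o_def)
  have Zlim: "(\<lambda>n. Zs (\<sigma> n)) \<longlonglongrightarrow> Z" using Zlim0 by (simp add: \<sigma>_def o_def)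
  have expG_pos: "mat_exp (t *\<^sub>R Z) \<in> G" if t0: "0 \<le> t" for t
  proof -
    define m where "m n = nat \<lfloor>t / e (\<sigma> n)\<rfloor>" for n
    have mbounds: "t - e (\<sigma> n) \<le> real (m n) * e (\<sigma> n) \<and> real (m n) * e (\<sigma> n) \<le> t" for n
    proof -
      have ep: "0 < e (\<sigma> n)" by (rule e_pos)
      have q0: "0 \<le> t / e (\<sigma> n)" using t0 ep by simp
      have rm: "real (m n) = of_int \<lfloor>t / e (\<sigma> n)\<rfloor>" using q0 by (simp add: m_def)
      have "t / e (\<sigma> n) - 1 \<le> of_int \<lfloor>t / e (\<sigma> n)\<rfloor>" by linarith
      moreover have "of_int \<lfloor>t / e (\<sigma> n)\<rfloor> \<le> t / e (\<sigma> n)" by simp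
      ultimately have "t / e (\<sigma> n) - 1 \<le> real (m n) \<and> real (m n) \<le> t / e (\<sigma> n)" using rm by simp
      then show ?thesis using ep by (simp add: field_simps)
    qed
    have mlim: "(\<lambda>n. real (m n) * e (\<sigma> n)) \<longlonglongrightarrow> t"
    proof (rule tendsto_sandwich[of "\<lambda>n. t - e (\<sigma> n)" _ _ "\<lambda>n. t"])
      show "\<forall>\<^sub>F n in sequentially. t - e (\<sigma> n) \<le> real (m n) * e (\<sigma> n)" using mbounds by simp
      show "\<forall>\<^sub>F n in sequentially. real (m n) * e (\<sigma> n) \<le> t" using mbounds by simp
      show "(\<lambda>n. t - e (\<sigma> n)) \<longlonglongrightarrow> t" using tendsto_diff[OF tendsto_const eslim, of t] by simp
    qed simp
    have lim: "(\<lambda>n. mat_power (mat 1 + e (\<sigma> n) *\<^sub>R Zs (\<sigma> n)) (m n)) \<longlonglongrightarrow> mat_exp (t *\<^sub>R Z)"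
      by (rule mat_power_limit[OF e_pos eslim Zlim mlim])
    have inG: "mat_power (mat 1 + e (\<sigma> n) *\<^sub>R Zs (\<sigma> n)) (m n) \<in> G" for n
      unfolding kZ[symmetric] by (rule mat_power_in[OF sub kG])
    show ?thesis using cl lim inG unfolding closed_sequential_limits by (meson allI)
  qed
  have expG: "mat_exp (t *\<^sub>R Z) \<in> G" for t
  proof (cases "0 \<le> t")
    case True then show ?thesis by (rule expG_pos)
  next
    case False
    have "matrix_inv (mat_exp ((-t) *\<^sub>R Z)) = mat_exp (t *\<^sub>R Z)"
      using mat_exp_inverse[of "-t" Z] by (intro inv_unique) simp
    moreover have "matrix_inv (mat_exp ((-t) *\<^sub>R Z)) \<in> G"
      using sub expG_pos[of "-t"] False by (simp add: matrix_subgroup_def)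
    ultimately show ?thesis by simp
  qed
  have ZL: "Z \<in> lie_algebra G" using expG by (simp add: lie_algebra_def)
  have Zsx: "Zs n *v x = (1 / e n) *\<^sub>R (y n - x)" for n
    by (simp add: Zs_def scaleR_matrix_vector_assoc[symmetric] matrix_vector_mult_diff_rdistrib kx)
  have Zsx_bound: "norm (Zs n *v x) \<le> 2 * (u \<bullet> (Zs n *v x))" for n
  proof -
    have "u \<bullet> (Zs n *v x) = sin (s n) / e n"
      using e_pos[of n] by (simp add: Zsx inner_diff_right uy ux)
    moreover have "norm (Zs n *v x) = norm (y n - x) / e n" using e_pos[of n] by (simp add: Zsx)
    ultimately show ?thesis using yx_bound[of n] e_pos[of n]
      by (simp add: divide_right_mono)
  qed
  have Zx: "Z *v x = 0"
  proof -
    have l1: "(\<lambda>n. Zs (\<sigma> n) *v x) \<longlonglongrightarrow> Z *v x"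
      by (rule bounded_linear.tendsto[OF bounded_linear_mv Zlim])
    have "norm (Z *v x) \<le> 2 * (u \<bullet> (Z *v x))"
      by (rule LIMSEQ_le[OF tendsto_norm[OF l1] tendsto_mult[OF tendsto_const tendsto_inner[OF tendsto_const l1]]])
         (use Zsx_bound in auto)
    then show ?thesis using perp ZL by simp
  qed
  have expH: "mat_exp (t *\<^sub>R Z) \<in> H" for t
  proof -
    have "(t *\<^sub>R Z) *v x = 0" by (simp add: scaleR_matrix_vector_assoc[symmetric] Zx)
    then show ?thesis using expG[of t] mat_exp_fix by (simp add: H_def)
  qed
  (* first-order condition *)
  have Zneg: "Zs n \<bullet> Z \<le> 0" for n
  proof -
    define D where "D t = (1/t) *\<^sub>R (mat_exp (t *\<^sub>R Z) - mat 1)" for t :: real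
    have Dlim: "(D \<longlongrightarrow> Z) (at_right 0)"
      unfolding D_def by (rule tendsto_mono[OF at_le[OF subset_UNIV] mat_deriv0])
    have ineq: "2 * e n * (Zs n \<bullet> D t) \<le> t * (D t \<bullet> D t)" if t0: "0 < t" for t
    proof -
      have Et: "mat_exp (t *\<^sub>R Z) = mat 1 + t *\<^sub>R D t" using t0 by (simp add: D_def)
      have "norm (k n - mat 1) \<le> norm (k n - mat_exp (t *\<^sub>R Z))" by (rule kmin[OF expH])
      then have a: "norm (e n *\<^sub>R Zs n) \<le> norm (e n *\<^sub>R Zs n - t *\<^sub>R D t)"
        unfolding Et kZ by (simp add: algebra_simps)
      have b: "(e n *\<^sub>R Zs n) \<bullet> (e n *\<^sub>R Zs n) \<le> (e n *\<^sub>R Zs n - t *\<^sub>R D t) \<bullet> (e n *\<^sub>R Zs n - t *\<^sub>R D t)"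
        using a by (simp only: norm_le)
      have c: "(e n *\<^sub>R Zs n - t *\<^sub>R D t) \<bullet> (e n *\<^sub>R Zs n - t *\<^sub>R D t)
          = (e n *\<^sub>R Zs n) \<bullet> (e n *\<^sub>R Zs n) - 2 * t * e n * (Zs n \<bullet> D t) + t * t * (D t \<bullet> D t)"
        unfolding inner_diff_left inner_diff_right inner_scaleR_left inner_scaleR_right inner_commute[of "D t" "Zs n"]
        by (simp add: algebra_simps)
      have "t * (2 * e n * (Zs n \<bullet> D t)) \<le> t * (t * (D t \<bullet> D t))"
        using b c by (simp only: mult.assoc[symmetric])
      then show ?thesis using t0 by (rule mult_left_le_imp_le)
    qed
    have "2 * e n * (Zs n \<bullet> Z) \<le> 0 * (Z \<bullet> Z)"
    proof (rule tendsto_le[OF trivial_limit_at_right_real])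
      show "((\<lambda>t. t * (D t \<bullet> D t)) \<longlongrightarrow> 0 * (Z \<bullet> Z)) (at_right 0)"
        by (intro tendsto_intros Dlim)
      show "((\<lambda>t. 2 * e n * (Zs n \<bullet> D t)) \<longlongrightarrow> 2 * e n * (Zs n \<bullet> Z)) (at_right 0)"
        by (intro tendsto_intros Dlim)
      show "\<forall>\<^sub>F t in at_right 0. 2 * e n * (Zs n \<bullet> D t) \<le> t * (D t \<bullet> D t)"
        using eventually_at_right_less[of "0::real"] by (rule eventually_mono) (rule ineq)
    qed
    then show ?thesis using e_pos[of n] by (simp add: mult_le_0_iff)
  qed
  have "Z \<bullet> Z \<le> 0"
    by (rule LIMSEQ_le_const2[OF tendsto_inner[OF Zlim tendsto_const]]) (use Zneg in auto)
  then show False using Z1 by (simp add: norm_eq_sqrt_inner)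
qed


lemma span_lemma:
  fixes G :: "(real^'n^'n) set" and x v :: "real^'n"
  assumes sub: "matrix_subgroup G" and SOG: "G \<subseteq> SO" and cl: "closed G"
    and tr: "transitive_on_sphere G"
    and x1: "norm x = 1" and vx: "v \<bullet> x = 0"
  shows "v \<in> span {X *v x | X. X \<in> lie_algebra G}"
proof (rule ccontr)
  let ?S = "{X *v x | X. X \<in> lie_algebra G}"
  assume nv: "v \<notin> span ?S"
  obtain p q where p: "p \<in> span ?S" and q: "\<And>w. w \<in> span ?S \<Longrightarrow> orthogonal q w" and vpq: "v = p + q"
    using orthogonal_subspace_decomp_exists[of ?S v] by blast
  have q0: "q \<noteq> 0" using nv p vpq by auto
  have Sx: "?S \<subseteq> {w. w \<bullet> x = 0}"
  proof
    fix w assume "w \<in> ?S"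
    then obtain X where X: "X \<in> lie_algebra G" "w = X *v x" by blast
    show "w \<in> {w. w \<bullet> x = 0}" using skew_form[OF SOG X(1), of x] X(2) by (simp add: inner_commute)
  qed
  have subx: "subspace {w::real^'n. w \<bullet> x = 0}"
    by (auto simp: subspace_def inner_add_left)
  have px: "p \<bullet> x = 0" using span_minimal[OF Sx subx] p by blast
  have qx: "q \<bullet> x = 0" using vx vpq px by (simp add: inner_add_left)
  define u where "u = (1 / norm q) *\<^sub>R q"
  have u1: "norm u = 1" using q0 by (simp add: u_def)
  have ux: "u \<bullet> x = 0" using qx by (simp add: u_def)
  have perp: "\<forall>X\<in>lie_algebra G. u \<bullet> (X *v x) = 0"
  proof
    fix X assume "X \<in> lie_algebra G"
    then have "X *v x \<in> span ?S" by (intro span_base) blast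
    then have "q \<bullet> (X *v x) = 0" using q by (simp add: orthogonal_def)
    then show "u \<bullet> (X *v x) = 0" by (simp add: u_def)
  qed
  show False by (rule core[OF sub SOG cl tr x1 u1 ux perp])
qed

theorem lemma5p2:
  fixes G :: "(real^'n^'n) set" and A :: "real^'n^'n"
  assumes "matrix_subgroup G" and "G \<subseteq> SO"
    and "closed G" and "connected G"
    and "transitive_on_sphere G"
    and "invertible A"
    and "(\<lambda>X. A ** X ** matrix_inv A) ` lie_algebra G = lie_algebra G"
  shows "A \<in> CO"
proof -
  note sub = assms(1) and SOG = assms(2) and cl = assms(3) and tr = assms(5) and invA = assms(6)
  have P: "(A *v z) \<bullet> (A *v (X *v z)) = 0" if X: "X \<in> lie_algebra G" for X z
  proof -
    have Y: "A ** X ** matrix_inv A \<in> lie_algebra G" using assms(7) X by blast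
    have "(A ** X ** matrix_inv A) ** A = A ** X"
      by (simp add: matrix_mul_assoc[symmetric] inv_props[OF invA])
    then have "(A ** X ** matrix_inv A) *v (A *v z) = A *v (X *v z)"
      by (simp add: matrix_vector_mul_assoc)
    then show ?thesis using skew_form[OF SOG Y, of "A *v z"] by simp
  qed
  have key: "(A *v x) \<bullet> (A *v v) = 0" if x1: "norm x = 1" and vx: "v \<bullet> x = 0" for x v
  proof -
    let ?S = "{X *v x | X. X \<in> lie_algebra G}"
    let ?T = "{w. (A *v x) \<bullet> (A *v w) = 0}"
    have ST: "?S \<subseteq> ?T" using P by auto
    have subT: "subspace ?T"
      by (auto simp: subspace_def matrix_vector_right_distrib inner_add_right matrix_scaleR_vector_ac scaleR_matrix_vector_assoc[symmetric])
    have "v \<in> span ?S" by (rule span_lemma[OF sub SOG cl tr x1 vx])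
    then show ?thesis using span_minimal[OF ST subT] by blast
  qed
  define c where "c i = A *v axis i (1::real)" for i
  have corth: "c i \<bullet> c j = 0" if "i \<noteq> j" for i j
    using key[of "axis i 1" "axis j 1"] that by (simp add: c_def inner_axis_axis)
  have ceq: "c i \<bullet> c i = c j \<bullet> c j" for i j
  proof (cases "i = j")
    case False
    define x where "x = (1 / sqrt 2) *\<^sub>R (axis i (1::real) + axis j 1)"
    define v where "v = axis i (1::real) - axis j 1"
    have "x \<bullet> x = 1"
      using False by (simp add: x_def inner_add_left inner_add_right inner_axis_axis power2_eq_square[symmetric])
    then have x1: "norm x = 1" by (simp add: norm_eq_sqrt_inner)
    have vx: "v \<bullet> x = 0" using False
      by (simp add: x_def v_def inner_add_left inner_add_right inner_diff_left inner_diff_right inner_axis_axis)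
    have "(A *v x) \<bullet> (A *v v) = 0" by (rule key[OF x1 vx])
    moreover have "A *v x = (1 / sqrt 2) *\<^sub>R (c i + c j)"
      by (simp add: x_def c_def matrix_vector_right_distrib matrix_scaleR_vector_ac scaleR_matrix_vector_assoc[symmetric] scaleR_add_right)
    moreover have "A *v v = c i - c j"
      by (simp add: v_def c_def matrix_vector_mult_diff_distrib)
    ultimately have "(1 / sqrt 2) * ((c i + c j) \<bullet> (c i - c j)) = 0" by simp
    then have "(c i + c j) \<bullet> (c i - c j) = 0" by simp
    then have "c i \<bullet> c i - c i \<bullet> c j + c j \<bullet> c i - c j \<bullet> c j = 0"
      by (simp only: inner_add_left inner_diff_right)
    then show ?thesis by (simp add: inner_commute)
  qed simp
  obtain i0 :: 'n where True by simp
  have ci0: "c i0 \<noteq> 0"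
  proof
    assume "c i0 = 0"
    then have "matrix_inv A *v (A *v axis i0 1) = 0" by (simp add: c_def)
    then have "axis i0 (1::real) = 0" by (simp add: matrix_vector_mul_assoc inv_props[OF invA])
    then show False by (metis axis_nth zero_index zero_neq_one)
  qed
  define r where "r = norm (c i0)"
  have r0: "r > 0" using ci0 by (simp add: r_def)
  have cn: "c i \<bullet> c i = r * r" for i
    using ceq[of i i0] by (simp add: r_def norm_eq_sqrt_inner)
  define B where "B = (1 / r) *\<^sub>R A"
  have colB: "column i B = (1 / r) *\<^sub>R c i" for i
    by (simp add: B_def c_def matrix_vector_mult_basis[symmetric] scaleR_matrix_vector_assoc)
  have "transpose B ** B = mat 1"
    unfolding matrix_mult_transpose_dot_column
    using r0 by (simp add: vec_eq_iff mat_def colB corth cn)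
  then have oB: "orthogonal_matrix B" by (simp add: orthogonal_matrix)
  have "A = r *\<^sub>R B" using r0 by (simp add: B_def)
  then show ?thesis unfolding CO_def using oB r0 by (intro CollectI exI[of _ r] exI[of _ B]) simp
qed

end
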